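(* Let $\mathcal{D}=(\Omega,\mathcal{B})$ be a supersimple $2$-$(n,4,\lambda)$ design. Fix $\infty\in\Omega$ and define $G:=\mathcal{L}_\infty(\mathcal{D})$. The following are equivalent: (i) $G$ is a group; (ii) $G=\mathcal{L}(\mathcal{D})=\langle[a,b]\mid a,b\in\Omega\rangle$; (iii) $\mathcal{L}(\mathcal{D})=\mathcal{L}_x(\mathcal{D})$ for all $x\in\Omega$. Furthermore, if one (and therefore all) of these conditions hold, then $G$ is transitive on $\Omega$ and $\operatorname{stab}_G(\infty)=\pi_\infty(\mathcal{D})$.
   Context: A $2$-$(n,4,\lambda)$ design $(\Omega,\mathcal{B})$: $n$ points, a multiset of $4$-subsets (lines), every $2$-subset in exactly $\lambda$ lines; supersimple: distinct lines meet in at most two points. For distinct $a,b$ with lines $\{a,b,a_i,b_i\}$ ($1\le i\le\lambda$) through them, $[a,b]:=(a,b)\prod_i(a_i,b_i)\in\operatorname{Sym}(\Omega)$; $[a,a]:=1$. Permutations act on the right, products composed left to right; move sequence $[a_0,\dots,a_k]:=[a_0,a_1][a_1,a_2]\cdots[a_{k-1},a_k]$. $\mathcal{L}(\mathcal{D})$ is the set of all move sequences; $\mathcal{L}_x(\mathcal{D})$ is the set of move sequences $[x,a_1,\dots,a_k]$ ($k\ge1$) starting at $x$; $\pi_\infty(\mathcal{D})$ is the set of move sequences starting and ending at $\infty$. *)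

theory Defs
  imports "HOL-Library.Multiset" "HOL-Combinatorics.Permutations"
begin

definition design_2_4 :: "nat \<Rightarrow> nat \<Rightarrow> 'a set \<Rightarrow> 'a set multiset \<Rightarrow> bool" where
  "design_2_4 n lam \<Omega> \<B> \<longleftrightarrow>
     finite \<Omega> \<and> card \<Omega> = n \<and>
     (\<forall>B \<in># \<B>. B \<subseteq> \<Omega> \<and> card B = 4) \<and>
     (\<forall>x\<in>\<Omega>. \<forall>y\<in>\<Omega>. x \<noteq> y \<longrightarrow> size (filter_mset (\<lambda>B. {x, y} \<subseteq> B) \<B>) = lam)"

definition supersimple :: "'a set multiset \<Rightarrow> bool" where
  "supersimple \<B> \<longleftrightarrow>
     (\<forall>B. count \<B> B \<le> 1) \<and>
     (\<forall>B1 \<in># \<B>. \<forall>B2 \<in># \<B>. B1 \<noteq> B2 \<longrightarrow> card (B1 \<inter> B2) \<le> 2)"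

text \<open>The move [a,b] = (a,b) * prod_i (a_i,b_i), where {a,b,a_i,b_i} are the lines through
 a and b; [a,a] = 1.  Since the transpositions are disjoint (supersimplicity), it is
 written out pointwise: a point x on a line {a,b,x,y} is sent to y, a and b are swapped,
 and all other points are fixed.\<close>
definition move :: "'a set multiset \<Rightarrow> 'a \<Rightarrow> 'a \<Rightarrow> 'a \<Rightarrow> 'a" where
  "move \<B> a b x =
     (if a = b then x
      else if x = a then b
      else if x = b then a
      else if (\<exists>B \<in># \<B>. {a, b, x} \<subseteq> B)
        then (THE y. \<exists>B \<in># \<B>. B = {a, b, x, y} \<and> y \<notin> {a, b, x})
      else x)"

text \<open>Move sequence [a0,...,ak] = [a0,a1][a1,a2]...[a(k-1),ak], permutations acting on the
 right and products composed left to right, so as functions x \<mapsto> [a1,a2]([a0,a1] x).\<close>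
fun move_seq :: "'a set multiset \<Rightarrow> 'a list \<Rightarrow> 'a \<Rightarrow> 'a" where
  "move_seq \<B> [] = id"
| "move_seq \<B> [a] = id"
| "move_seq \<B> (a # b # rest) = move_seq \<B> (b # rest) \<circ> move \<B> a b"

definition L_all :: "'a set \<Rightarrow> 'a set multiset \<Rightarrow> ('a \<Rightarrow> 'a) set" where
  "L_all \<Omega> \<B> = {move_seq \<B> xs | xs. xs \<noteq> [] \<and> set xs \<subseteq> \<Omega>}"

definition L_from :: "'a set \<Rightarrow> 'a set multiset \<Rightarrow> 'a \<Rightarrow> ('a \<Rightarrow> 'a) set" where
  "L_from \<Omega> \<B> x = {move_seq \<B> (x # xs) | xs. xs \<noteq> [] \<and> set xs \<subseteq> \<Omega>}"

definition pi_loops :: "'a set \<Rightarrow> 'a set multiset \<Rightarrow> 'a \<Rightarrow> ('a \<Rightarrow> 'a) set" where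
  "pi_loops \<Omega> \<B> x = {move_seq \<B> xs | xs. xs \<noteq> [] \<and> set xs \<subseteq> \<Omega> \<and> hd xs = x \<and> last xs = x}"

definition is_perm_group :: "'a set \<Rightarrow> ('a \<Rightarrow> 'a) set \<Rightarrow> bool" where
  "is_perm_group \<Omega> G \<longleftrightarrow>
     (\<forall>p\<in>G. p permutes \<Omega>) \<and> id \<in> G \<and>
     (\<forall>p\<in>G. \<forall>q\<in>G. p \<circ> q \<in> G) \<and> (\<forall>p\<in>G. inv p \<in> G)"

inductive_set gen_group :: "('a \<Rightarrow> 'a) set \<Rightarrow> ('a \<Rightarrow> 'a) set" for S where
  gen_id: "id \<in> gen_group S"
| gen_gen: "s \<in> S \<Longrightarrow> s \<in> gen_group S"
| gen_comp: "p \<in> gen_group S \<Longrightarrow> q \<in> gen_group S \<Longrightarrow> p \<circ> q \<in> gen_group S"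
| gen_inv: "p \<in> gen_group S \<Longrightarrow> inv p \<in> gen_group S"

definition transitive_on :: "'a set \<Rightarrow> ('a \<Rightarrow> 'a) set \<Rightarrow> bool" where
  "transitive_on \<Omega> G \<longleftrightarrow> (\<forall>x\<in>\<Omega>. \<forall>y\<in>\<Omega>. \<exists>g\<in>G. g x = y)"

definition stabilizer :: "('a \<Rightarrow> 'a) set \<Rightarrow> 'a \<Rightarrow> ('a \<Rightarrow> 'a) set" where
  "stabilizer G x = {g \<in> G. g x = x}"

end

theory Submission
  imports Defs
begin


lemma move_same: "move \<B> a a x = x"
  unfolding move_def by (simp only: if_True simp_thms)

lemma move_first: "move \<B> a b a = b"
  unfolding move_def by (cases "a = b") (simp_all only: if_True if_False simp_thms)

lemma move_second: assumes "a \<noteq> b" shows "move \<B> a b b = a"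
proof -
  have "b \<noteq> a" using assms by blast
  then show ?thesis unfolding move_def using assms by simp
qed

lemma move_off: "a \<noteq> b \<Longrightarrow> x \<noteq> a \<Longrightarrow> x \<noteq> b \<Longrightarrow> \<not> (\<exists>B\<in>#\<B>. {a, b, x} \<subseteq> B) \<Longrightarrow>
   move \<B> a b x = x"
  unfolding move_def by (simp only: if_False)

lemma move_on: "a \<noteq> b \<Longrightarrow> x \<noteq> a \<Longrightarrow> x \<noteq> b \<Longrightarrow> (\<exists>B\<in>#\<B>. {a, b, x} \<subseteq> B) \<Longrightarrow>
   move \<B> a b x = (THE y. \<exists>B \<in># \<B>. B = {a, b, x, y} \<and> y \<notin> {a, b, x})"
  unfolding move_def by (simp only: if_False if_True)

lemma move_unique:
  assumes ss: "supersimple \<B>" and c4: "\<forall>B\<in>#\<B>. card B = 4"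
    and B: "B \<in># \<B>" "B = {a,b,x,y}" "y \<notin> {a,b,x}"
    and d: "a \<noteq> b" "x \<noteq> a" "x \<noteq> b"
  shows "move \<B> a b x = y"
proof -
  have sB: "{a, b, x} \<subseteq> B" using B(2) by blast
  have ex: "\<exists>B\<in>#\<B>. {a, b, x} \<subseteq> B" using B(1) sB by blast
  have "(THE y. \<exists>B \<in># \<B>. B = {a, b, x, y} \<and> y \<notin> {a, b, x}) = y"
  proof (rule the_equality)
    show "\<exists>B \<in># \<B>. B = {a, b, x, y} \<and> y \<notin> {a, b, x}" using B by blast
  next
    fix z assume "\<exists>B' \<in># \<B>. B' = {a, b, x, z} \<and> z \<notin> {a, b, x}"
    then obtain B' where B': "B' \<in># \<B>" "B' = {a,b,x,z}" "z \<notin> {a,b,x}" by blast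
    have "B' = B"
    proof (rule ccontr)
      assume ne: "B' \<noteq> B"
      have le2: "card (B \<inter> B') \<le> 2" using ss B'(1) B(1) ne unfolding supersimple_def by blast
      have sub3: "{a,b,x} \<subseteq> B \<inter> B'" using sB B'(2) by blast
      have fin: "finite (B \<inter> B')" using B(2) by simp
      have c3: "card {a,b,x} = 3" using d by simp
      have "card {a,b,x} \<le> card (B \<inter> B')" by (rule card_mono[OF fin sub3])
      then show False using le2 c3 by linarith
    qed
    then have "z \<in> B" using B'(2) by blast
    then show "z = y" using B(2) B'(3) by blast
  qed
  then show ?thesis using move_on[OF d ex] by simp
qed

lemma move_invol:
  assumes ss: "supersimple \<B>" and c4: "\<forall>B\<in>#\<B>. card B = 4"
  shows "move \<B> a b (move \<B> a b x) = x"
proof -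
  consider "a = b" | "a \<noteq> b" "x = a" | "a \<noteq> b" "x = b"
    | "a \<noteq> b" "x \<noteq> a" "x \<noteq> b" "\<exists>B\<in>#\<B>. {a, b, x} \<subseteq> B"
    | "a \<noteq> b" "x \<noteq> a" "x \<noteq> b" "\<not>(\<exists>B\<in>#\<B>. {a, b, x} \<subseteq> B)" by blast
  then show ?thesis
  proof cases
    case 1 then show ?thesis by (simp only: move_same)
  next
    case 2 then show ?thesis using move_first[of \<B> a b] move_second[of a b \<B>] by simp
  next
    case 3 then show ?thesis using move_first[of \<B> a b] move_second[of a b \<B>] by simp
  next
    case 5 then show ?thesis using move_off[of a b x \<B>] by simp
  next
    case 4
    then obtain B where B: "B \<in># \<B>" "{a,b,x} \<subseteq> B" by blast
    have cB: "card B = 4" using c4 B(1) by blast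
    have fin: "finite B" by (rule card_ge_0_finite) (simp add: cB)
    have c3: "card {a,b,x} = 3" using 4 by simp
    have "card (B - {a,b,x}) = card B - card {a,b,x}"
      by (rule card_Diff_subset) (simp, rule B(2))
    then have "card (B - {a,b,x}) = Suc 0" using cB c3 by arith
    then obtain y where y: "B - {a,b,x} = {y}" unfolding card_1_singleton_iff by (elim exE)
    have yB: "y \<in> B - {a,b,x}" using y by simp
    have yn: "y \<notin> {a,b,x}" using yB by simp
    have "B = {a,b,x} \<union> (B - {a,b,x})" using B(2) by auto
    also have "\<dots> = {a,b,x,y}" unfolding y by auto
    finally have By: "B = {a,b,x,y}" .
    have m1: "move \<B> a b x = y" using move_unique[OF ss c4 B(1) By yn 4(1,2,3)] .
    have By2: "B = {a,b,y,x}" using By by auto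
    have d2: "y \<noteq> a" "y \<noteq> b" "y \<noteq> x" using yn by simp_all
    have xn: "x \<notin> {a,b,y}" using d2 4(2,3) by simp
    have m2: "move \<B> a b y = x" using move_unique[OF ss c4 B(1) By2 xn 4(1) d2(1,2)] .
    show ?thesis using m1 m2 by simp
  qed
qed

lemma move_sym: "move \<B> a b = move \<B> b a"
proof (rule ext)
  fix x
  show "move \<B> a b x = move \<B> b a x"
  proof (cases "a = b")
    case True then show ?thesis by simp
  next
    case ab: False
    have ba: "b \<noteq> a" using ab by blast
    show ?thesis
    proof (cases "x = a \<or> x = b")
      case True then show ?thesis
        using move_first[of \<B> a b] move_second[OF ab, of \<B>] move_first[of \<B> b a] move_second[OF ba, of \<B>]
        by (elim disjE) simp_all
    next
      case False
      then have xa: "x \<noteq> a" "x \<noteq> b" by blast+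
      have e: "\<And>y. {a, b, x, y} = {b, a, x, y}" "{a, b, x} = {b, a, x}" by auto
      show ?thesis
      proof (cases "\<exists>B\<in>#\<B>. {a, b, x} \<subseteq> B")
        case True
        then have T2: "\<exists>B\<in>#\<B>. {b, a, x} \<subseteq> B" by (simp only: e)
        show ?thesis unfolding move_on[OF ab xa True] move_on[OF ba xa(2,1) T2] e ..
      next
        case False
        then have T2: "\<not> (\<exists>B\<in>#\<B>. {b, a, x} \<subseteq> B)" by (simp only: e not_False_eq_True)
        show ?thesis using move_off[OF ab xa False] move_off[OF ba xa(2,1) T2] by simp
      qed
    qed
  qed
qed

lemma move_permutes:
  assumes inv: "\<And>x. m (m x) = x" and out: "\<And>x. x \<notin> \<Omega> \<Longrightarrow> m x = x"
  shows "m permutes \<Omega>"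
  unfolding permutes_def using out by (metis inv)

lemma ms_append: "xs \<noteq> [] \<Longrightarrow> move_seq \<B> (xs @ ys) = move_seq \<B> (last xs # ys) \<circ> move_seq \<B> xs"
  by (induction xs rule: induct_list012) auto

lemma ms_hd: "xs \<noteq> [] \<Longrightarrow> move_seq \<B> xs (hd xs) = last xs"
  by (induction xs rule: induct_list012) (auto simp: move_first)

lemma ms_rev:
  assumes inv: "\<And>a b x. move \<B> a b (move \<B> a b x) = x"
  shows "move_seq \<B> (rev xs) \<circ> move_seq \<B> xs = id"
proof (induction xs rule: induct_list012)
  case (3 a b rest)
  have "rev (a # b # rest) = rev (b # rest) @ [a]" by simp
  hence "move_seq \<B> (rev (a # b # rest)) = move \<B> b a \<circ> move_seq \<B> (rev (b # rest))"
    by (simp add: ms_append last_rev del: rev.simps)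
  hence "move_seq \<B> (rev (a # b # rest)) \<circ> move_seq \<B> (a # b # rest)
     = move \<B> b a \<circ> (move_seq \<B> (rev (b # rest)) \<circ> move_seq \<B> (b # rest)) \<circ> move \<B> a b"
    by (simp add: o_assoc)
  also have "\<dots> = id" using 3 inv by (auto simp: move_sym[of _ b a] fun_eq_iff)
  finally show ?case .
qed auto

lemma ms_inv:
  assumes inv: "\<And>a b x. move \<B> a b (move \<B> a b x) = x"
  shows "inv (move_seq \<B> xs) = move_seq \<B> (rev xs)"
  using ms_rev[OF inv, of xs] ms_rev[OF inv, of "rev xs"]
  by (intro inv_unique_comp) auto

lemma ms_gen: "set xs \<subseteq> \<Omega> \<Longrightarrow>
   move_seq \<B> xs \<in> gen_group {move \<B> a b | a b. a \<in> \<Omega> \<and> b \<in> \<Omega>}"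
proof (induction xs rule: induct_list012)
  case (3 a b rest)
  have m: "move \<B> a b \<in> gen_group {move \<B> a b | a b. a \<in> \<Omega> \<and> b \<in> \<Omega>}"
    by (rule gen_gen) (use 3 in auto)
  have IH: "move_seq \<B> (b # rest) \<in> gen_group {move \<B> a b | a b. a \<in> \<Omega> \<and> b \<in> \<Omega>}"
    using 3 by auto
  show ?case unfolding move_seq.simps by (rule gen_comp[OF IH m])
qed (auto intro: gen_group.intros)

lemma gen_permutes: "p \<in> gen_group S \<Longrightarrow> (\<And>s. s \<in> S \<Longrightarrow> s permutes \<Omega>) \<Longrightarrow> p permutes \<Omega>"
  by (induction rule: gen_group.induct) (auto intro: permutes_id permutes_compose permutes_inv)


theorem lemma2p6:
  fixes \<Omega> :: "'a set" and \<B> :: "'a set multiset" and n lam :: nat and inf_pt :: 'a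
  assumes "design_2_4 n lam \<Omega> \<B>"
    and "supersimple \<B>"
    and "inf_pt \<in> \<Omega>"
  defines "G \<equiv> L_from \<Omega> \<B> inf_pt"
  shows "(is_perm_group \<Omega> G
           \<longleftrightarrow> (G = L_all \<Omega> \<B> \<and> L_all \<Omega> \<B> = gen_group {move \<B> a b | a b. a \<in> \<Omega> \<and> b \<in> \<Omega>}))
       \<and> ((G = L_all \<Omega> \<B> \<and> L_all \<Omega> \<B> = gen_group {move \<B> a b | a b. a \<in> \<Omega> \<and> b \<in> \<Omega>})
           \<longleftrightarrow> (\<forall>x\<in>\<Omega>. L_all \<Omega> \<B> = L_from \<Omega> \<B> x))
       \<and> (is_perm_group \<Omega> G \<longrightarrow>
            transitive_on \<Omega> G \<and> stabilizer G inf_pt = pi_loops \<Omega> \<B> inf_pt)"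
proof -
  define S where "S = {move \<B> a b | a b. a \<in> \<Omega> \<and> b \<in> \<Omega>}"
  define LA where "LA = L_all \<Omega> \<B>"
  note ss = assms(2)
  have c4: "\<forall>B\<in>#\<B>. card B = 4" and sub: "\<forall>B\<in>#\<B>. B \<subseteq> \<Omega>"
    using assms(1) unfolding design_2_4_def by auto
  have inv: "\<And>a b x. move \<B> a b (move \<B> a b x) = x" using move_invol[OF ss c4] .
  have invc: "\<And>a b. move \<B> a b \<circ> move \<B> a b = id" using inv by (auto simp: fun_eq_iff)
  have inf: "inf_pt \<in> \<Omega>" by fact
  have perm: "s permutes \<Omega>" if sS: "s \<in> S" for s
  proof -
    obtain a b where s: "s = move \<B> a b" "a \<in> \<Omega>" "b \<in> \<Omega>" using sS unfolding S_def by blast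
    have fix_out: "move \<B> a b x = x" if xo: "x \<notin> \<Omega>" for x
    proof -
      have nl: "\<not> (\<exists>B\<in>#\<B>. {a, b, x} \<subseteq> B)" using sub xo by blast
      have "x \<noteq> a" "x \<noteq> b" using xo s(2,3) by blast+
      then show ?thesis using nl unfolding move_def by (simp, blast)
    qed
    show ?thesis unfolding s(1) by (rule move_permutes[OF inv fix_out])
  qed
  have ms_LA: "move_seq \<B> xs \<in> LA" if "xs \<noteq> []" "set xs \<subseteq> \<Omega>" for xs
    unfolding LA_def L_all_def using that by blast
  have mv_LA: "move \<B> a b \<in> LA" if "a \<in> \<Omega>" "b \<in> \<Omega>" for a b
    using ms_LA[of "[a,b]"] that by simp
  have LAE: "\<exists>xs. p = move_seq \<B> xs \<and> xs \<noteq> [] \<and> set xs \<subseteq> \<Omega>" if "p \<in> LA" for p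
    using that unfolding LA_def L_all_def by blast
  have LFE: "\<exists>xs. p = move_seq \<B> (x # xs) \<and> xs \<noteq> [] \<and> set xs \<subseteq> \<Omega>"
    if "p \<in> L_from \<Omega> \<B> x" for p x
    using that unfolding L_from_def by blast
  have LF_I: "move_seq \<B> (x # xs) \<in> L_from \<Omega> \<B> x" if "xs \<noteq> []" "set xs \<subseteq> \<Omega>" for x xs
    unfolding L_from_def using that by blast
  have LA_gen: "LA \<subseteq> gen_group S"
  proof
    fix p assume "p \<in> LA"
    then obtain xs where xs: "p = move_seq \<B> xs" "set xs \<subseteq> \<Omega>" using LAE by blast
    show "p \<in> gen_group S" unfolding xs(1) S_def by (rule ms_gen[OF xs(2)])
  qed
  have LF_LA: "L_from \<Omega> \<B> x \<subseteq> LA" if x: "x \<in> \<Omega>" for x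
  proof
    fix p assume "p \<in> L_from \<Omega> \<B> x"
    then obtain xs where "p = move_seq \<B> (x # xs)" "set xs \<subseteq> \<Omega>" using LFE by blast
    then show "p \<in> LA" using ms_LA[of "x # xs"] x by simp
  qed
  have C1: "G = LA" if grp: "is_perm_group \<Omega> G"
  proof
    show "G \<subseteq> LA" unfolding G_def using LF_LA[OF inf] .
    show "LA \<subseteq> G"
    proof
      fix p assume "p \<in> LA"
      then obtain xs where xs: "p = move_seq \<B> xs" "xs \<noteq> []" "set xs \<subseteq> \<Omega>" using LAE by blast
      then obtain a rest where ar: "xs = a # rest" by (cases xs) auto
      show "p \<in> G"
      proof (cases "rest = []")
        case True
        then show ?thesis using grp xs ar unfolding is_perm_group_def by simp
      next
        case False
        have g1: "move_seq \<B> (inf_pt # a # rest) \<in> G" unfolding G_def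
          by (rule LF_I) (use xs ar in auto)
        have g2: "move \<B> inf_pt a \<in> G" unfolding G_def
          using LF_I[of "[a]" inf_pt] xs ar by simp
        have "move_seq \<B> (inf_pt # a # rest) \<circ> move \<B> inf_pt a = p"
          using xs ar by (simp add: o_assoc[symmetric] invc)
        then show ?thesis using grp g1 g2 unfolding is_perm_group_def by metis
      qed
    qed
  qed
  have C3: "LA = gen_group S" if grp: "is_perm_group \<Omega> G"
  proof
    show "LA \<subseteq> gen_group S" by (rule LA_gen)
    show "gen_group S \<subseteq> LA"
    proof
      fix p assume "p \<in> gen_group S"
      then show "p \<in> LA"
      proof (induction rule: gen_group.induct)
        case gen_id then show ?case using grp C1[OF grp] unfolding is_perm_group_def by blast
      next
        case (gen_gen s) then show ?case using mv_LA unfolding S_def by blast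
      next
        case (gen_comp p q) then show ?case using grp C1[OF grp] unfolding is_perm_group_def by blast
      next
        case (gen_inv p) then show ?case using grp C1[OF grp] unfolding is_perm_group_def by blast
      qed
    qed
  qed
  have C2: "is_perm_group \<Omega> G" if "G = LA" "LA = gen_group S"
    unfolding is_perm_group_def using that gen_permutes[OF _ perm]
    by (simp add: gen_group.gen_id gen_group.gen_comp gen_group.gen_inv)
  have C4: "\<forall>x\<in>\<Omega>. LA = L_from \<Omega> \<B> x" if h: "G = LA" "LA = gen_group S"
  proof
    fix x assume x: "x \<in> \<Omega>"
    show "LA = L_from \<Omega> \<B> x"
    proof
      show "L_from \<Omega> \<B> x \<subseteq> LA" using LF_LA[OF x] .
      show "LA \<subseteq> L_from \<Omega> \<B> x"
      proof
        fix h assume hLA: "h \<in> LA"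
        have "move \<B> x inf_pt \<in> LA" using mv_LA x inf by auto
        hence "h \<circ> move \<B> x inf_pt \<in> gen_group S" using hLA h gen_comp by blast
        hence "h \<circ> move \<B> x inf_pt \<in> G" using h by simp
        then obtain rest where r: "h \<circ> move \<B> x inf_pt = move_seq \<B> (inf_pt # rest)"
          "rest \<noteq> []" "set rest \<subseteq> \<Omega>" unfolding G_def using LFE by blast
        have "h = (h \<circ> move \<B> x inf_pt) \<circ> move \<B> x inf_pt" by (simp add: o_assoc[symmetric] invc)
        also have "\<dots> = move_seq \<B> (x # inf_pt # rest)" using r by simp
        finally show "h \<in> L_from \<Omega> \<B> x" using LF_I[of "inf_pt # rest" x] r inf by simp
      qed
    qed
  qed
  have C5: "G = LA \<and> LA = gen_group S" if h: "\<forall>x\<in>\<Omega>. LA = L_from \<Omega> \<B> x"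
  proof
    show "G = LA" using h inf unfolding G_def by simp
    show "LA = gen_group S"
    proof
      show "LA \<subseteq> gen_group S" by (rule LA_gen)
      show "gen_group S \<subseteq> LA"
      proof
        fix p assume "p \<in> gen_group S"
        then show "p \<in> LA"
        proof (induction rule: gen_group.induct)
          case gen_id then show ?case using ms_LA[of "[inf_pt]"] inf by (simp add: id_def)
        next
          case (gen_gen s) then show ?case using mv_LA unfolding S_def by blast
        next
          case (gen_comp p q)
          obtain xs where xs: "q = move_seq \<B> xs" "xs \<noteq> []" "set xs \<subseteq> \<Omega>" using LAE gen_comp by blast
          have "last xs \<in> \<Omega>" using xs by auto
          then have "p \<in> L_from \<Omega> \<B> (last xs)" using h gen_comp by auto
          then obtain ys where ys: "p = move_seq \<B> (last xs # ys)" "ys \<noteq> []" "set ys \<subseteq> \<Omega>"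
            using LFE by blast
          have "p \<circ> q = move_seq \<B> (xs @ ys)" using ms_append[OF xs(2)] xs ys by simp
          then show ?case using ms_LA[of "xs @ ys"] xs ys by simp
        next
          case (gen_inv p)
          obtain xs where xs: "p = move_seq \<B> xs" "xs \<noteq> []" "set xs \<subseteq> \<Omega>" using LAE gen_inv by blast
          show ?case using ms_inv[OF inv, of xs] ms_LA[of "rev xs"] xs by simp
        qed
      qed
    qed
  qed
  have C6: "transitive_on \<Omega> G \<and> stabilizer G inf_pt = pi_loops \<Omega> \<B> inf_pt"
    if grp: "is_perm_group \<Omega> G"
  proof
    have GLA: "G = LA" using C1[OF grp] .
    show "transitive_on \<Omega> G" unfolding transitive_on_def
    proof (intro ballI)
      fix x y assume "x \<in> \<Omega>" "y \<in> \<Omega>"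
      then show "\<exists>g\<in>G. g x = y" using mv_LA[of x y] GLA move_first[of \<B> x y] by blast
    qed
    show "stabilizer G inf_pt = pi_loops \<Omega> \<B> inf_pt"
    proof
      show "stabilizer G inf_pt \<subseteq> pi_loops \<Omega> \<B> inf_pt"
      proof
        fix g assume "g \<in> stabilizer G inf_pt"
        then have g: "g \<in> G" "g inf_pt = inf_pt" unfolding stabilizer_def by auto
        then obtain xs where xs: "g = move_seq \<B> (inf_pt # xs)" "xs \<noteq> []" "set xs \<subseteq> \<Omega>"
          unfolding G_def using LFE by blast
        have "last (inf_pt # xs) = inf_pt" using ms_hd[of "inf_pt # xs" \<B>] g xs by simp
        then show "g \<in> pi_loops \<Omega> \<B> inf_pt" unfolding pi_loops_def using xs inf
          by (intro CollectI exI[of _ "inf_pt # xs"]) auto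
      qed
      show "pi_loops \<Omega> \<B> inf_pt \<subseteq> stabilizer G inf_pt"
      proof
        fix g assume "g \<in> pi_loops \<Omega> \<B> inf_pt"
        then obtain xs where xs: "g = move_seq \<B> xs" "xs \<noteq> []" "set xs \<subseteq> \<Omega>"
          "hd xs = inf_pt" "last xs = inf_pt" unfolding pi_loops_def by blast
        have "g inf_pt = inf_pt" using ms_hd[OF xs(2), of \<B>] xs by simp
        then show "g \<in> stabilizer G inf_pt" using ms_LA[OF xs(2,3)] xs GLA
          unfolding stabilizer_def by simp
      qed
    qed
  qed
  show ?thesis
    unfolding S_def[symmetric] LA_def[symmetric]
  proof (intro conjI impI)
    show "is_perm_group \<Omega> G = (G = LA \<and> LA = gen_group S)" proof (rule iffI)
      assume g: "is_perm_group \<Omega> G" show "G = LA \<and> LA = gen_group S" using C1[OF g] C3[OF g] by (rule conjI)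
    next
      assume h: "G = LA \<and> LA = gen_group S" show "is_perm_group \<Omega> G" using C2 h by (elim conjE)
    qed
    show "(G = LA \<and> LA = gen_group S) = (\<forall>x\<in>\<Omega>. LA = L_from \<Omega> \<B> x)" proof (rule iffI)
      assume h: "G = LA \<and> LA = gen_group S" show "\<forall>x\<in>\<Omega>. LA = L_from \<Omega> \<B> x" using C4 h by (elim conjE)
    next
      assume h: "\<forall>x\<in>\<Omega>. LA = L_from \<Omega> \<B> x" show "G = LA \<and> LA = gen_group S" by (rule C5[OF h])
    qed
    show "transitive_on \<Omega> G" if "is_perm_group \<Omega> G" using C6[OF that] by (rule conjunct1)
    show "stabilizer G inf_pt = pi_loops \<Omega> \<B> inf_pt" if "is_perm_group \<Omega> G"
      using C6[OF that] by (rule conjunct2)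
  qed
qed

end
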